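(* For every even integer $n \ge 2$ and every $\epsilon$ with $0<\epsilon<\tfrac{1}{2}$, consider the instance with $n+1$ bamboos and growth rates $h(1)=1$, $h(2)=\cdots=h(n+1)=\tfrac12+\epsilon$. For this instance $H^{PW}=n+1$ and $H^*\le \tfrac{n}{2}+1+(n+2)\epsilon$. Consequently, $\sup H^{PW}/H^* \ge 2$, the supremum being taken over all instances; that is, the approximation ratio $2$ of algorithm PW is asymptotically tight.
   Context: An instance consists of an integer $n\ge 1$ and growth rates $1=h(1)\ge h(2)\ge\cdots\ge h(n)>0$ of bamboos $b_1,\dots,b_n$. Bamboo Garden Trimming (discrete version): - All heights are $0$ initially. - On each day $t=1,2,\dots$ every bamboo $b_j$ grows by $h(j)$. - At the end of each day the gardener cuts exactly one bamboo $\sigma(t)\in\{1,\dots,n\}$ back to height $0$. The height of a schedule $\sigma:\mathbb{N}\to\{1,\dots,n\}$ is the supremum, over all days $t$ and all $j$, of the height of $b_j$ at the end of day $t$ just before the cut. $H^*$ denotes the infimum of this height over all schedules. Algorithm PW: - For each $j$, let $h'(j)=2^{-k}$, where $k\ge 0$ is the integer with $2^{-(k+1)}<h(j)\le 2^{-k}$. - Bamboos are grouped into $\alpha=\lceil\sum_{j=1}^n h'(j)\rceil$ partitions, with rounded growths summing to at most $1$ in each partition. - The partitions are served cyclically. - Its value is $H^{PW}=\alpha\cdot h(1)=\lceil\sum_{j=1}^n h'(j)\rceil$. *)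

theory Defs
  imports "HOL-Analysis.Analysis"
begin

definition valid_instance :: "nat \<Rightarrow> (nat \<Rightarrow> real) \<Rightarrow> bool" where
  "valid_instance n h \<longleftrightarrow> n \<ge> 1 \<and> h 1 = 1 \<and>
     (\<forall>i j. 1 \<le> i \<and> i \<le> j \<and> j \<le> n \<longrightarrow> h j \<le> h i) \<and> h n > 0"

definition schedule :: "nat \<Rightarrow> (nat \<Rightarrow> nat) \<Rightarrow> bool" where
  "schedule n \<sigma> \<longleftrightarrow> (\<forall>t\<ge>1. \<sigma> t \<in> {1..n})"

definition last_cut :: "(nat \<Rightarrow> nat) \<Rightarrow> nat \<Rightarrow> nat \<Rightarrow> nat" where
  "last_cut \<sigma> j t = Max ({s. 1 \<le> s \<and> s < t \<and> \<sigma> s = j} \<union> {0})"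

text \<open>Height of bamboo j at the end of day t, just before the cut of day t.\<close>
definition height_at :: "(nat \<Rightarrow> real) \<Rightarrow> (nat \<Rightarrow> nat) \<Rightarrow> nat \<Rightarrow> nat \<Rightarrow> real" where
  "height_at h \<sigma> j t = h j * real (t - last_cut \<sigma> j t)"

definition sched_height :: "nat \<Rightarrow> (nat \<Rightarrow> real) \<Rightarrow> (nat \<Rightarrow> nat) \<Rightarrow> ereal" where
  "sched_height n h \<sigma> = (SUP p \<in> {1..} \<times> {1..n}. ereal (height_at h \<sigma> (snd p) (fst p)))"

definition H_star :: "nat \<Rightarrow> (nat \<Rightarrow> real) \<Rightarrow> ereal" where
  "H_star n h = (INF \<sigma> \<in> {\<sigma>. schedule n \<sigma>}. sched_height n h \<sigma>)"

definition round_rate :: "real \<Rightarrow> real" where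
  "round_rate x = 2 powr (- real (THE k::nat. 2 powr (- real (k + 1)) < x \<and> x \<le> 2 powr (- real k)))"

definition H_PW :: "nat \<Rightarrow> (nat \<Rightarrow> real) \<Rightarrow> real" where
  "H_PW n h = real_of_int \<lceil>\<Sum>j=1..n. round_rate (h j)\<rceil>"

end

theory Submission
  imports Defs
begin

lemma rr1: assumes "1/2 < x" "x \<le> (1::real)" shows "round_rate x = 1"
proof -
  have "(THE k::nat. 2 powr (- real (k + 1)) < x \<and> x \<le> 2 powr (- real k)) = 0"
  proof (rule the_equality)
    show "2 powr (- real (0 + 1)) < x \<and> x \<le> 2 powr (- real (0::nat))"
      using assms by (simp add: powr_minus)
  next
    fix k :: nat assume k: "2 powr (- real (k + 1)) < x \<and> x \<le> 2 powr (- real k)"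
    show "k = 0"
    proof (rule ccontr)
      assume "k \<noteq> 0"
      then have "2 powr (- real k) \<le> 2 powr (-1)" by (intro powr_mono) auto
      then show False using k assms by (simp add: powr_minus)
    qed
  qed
  then show ?thesis unfolding round_rate_def by simp
qed

lemma last_cut_ge: "1 \<le> s \<Longrightarrow> s < t \<Longrightarrow> \<sigma> s = j \<Longrightarrow> s \<le> last_cut \<sigma> j t"
  unfolding last_cut_def
  by (rule Max_ge) (auto intro: finite_subset[of _ "{..<t}"])

lemma gap_le:
  assumes "t \<le> P \<or> (\<exists>s. 1 \<le> s \<and> s < t \<and> \<sigma> s = j \<and> t \<le> s + P)"
  shows "t - last_cut \<sigma> j t \<le> P"
  using assms last_cut_ge[of _ t \<sigma> j] by force

definition sig :: "nat \<Rightarrow> nat \<Rightarrow> nat" where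
  "sig n t = (let m = n div 2 + 1; r = t mod (2*m) in
     if r mod m = 0 then 1 else if r < m then r + 1 else r)"

lemma sig_one:
  assumes "t > n div 2 + 1"
  shows "\<exists>s. 1 \<le> s \<and> s < t \<and> sig n s = 1 \<and> t \<le> s + (n div 2 + 1)"
proof -
  define m where "m = n div 2 + 1"
  have mpos: "m > 0" by (simp add: m_def)
  define s where "s = m * ((t-1) div m)"
  have "(t-1) div m \<ge> 1" proof -
    have "m \<le> t - 1" using assms by (simp add: m_def)
    then show ?thesis using mpos by (simp add: div_greater_zero_iff Suc_le_eq)
  qed
  then have s1: "s \<ge> 1" using mpos unfolding s_def
    by (simp add: Suc_le_eq)
  have "s + (t-1) mod m = t - 1" unfolding s_def by simp
  moreover have "(t-1) mod m < m" using mpos by simp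
  moreover have tm: "t > m" using assms m_def by simp
  ultimately have "s < t" "t \<le> s + m" by linarith+
  moreover have "s mod (2*m) mod m = 0" unfolding s_def
    by (simp add: mod_mod_cancel)
  moreover have "sig n s = 1" using \<open>s mod (2*m) mod m = 0\<close> unfolding sig_def Let_def m_def[symmetric] by simp
  ultimately show ?thesis using s1 unfolding m_def by blast
qed

lemma sig_other:
  assumes "even n" "2 \<le> j" "j \<le> n + 1" "t > n + 2"
  shows "\<exists>s. 1 \<le> s \<and> s < t \<and> sig n s = j \<and> t \<le> s + (n + 2)"
proof -
  define m where "m = n div 2 + 1"
  have m2: "2*m = n+2" using assms(1) by (auto simp: m_def)
  define r where "r = (if j \<le> m then j - 1 else j)"
  have r1: "1 \<le> r" "r < 2*m" "r \<noteq> m" using assms m2 by (auto simp: r_def)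
  define s where "s = 2*m * ((t-1-r) div (2*m)) + r"
  have "s + (t-1-r) mod (2*m) = (2*m * ((t-1-r) div (2*m)) + (t-1-r) mod (2*m)) + r" unfolding s_def by simp
  also have "\<dots> = (t-1-r) + r" by (simp only: mult_div_mod_eq)
  also have "\<dots> = t - 1" using r1 assms m2 by linarith
  finally have "s + (t-1-r) mod (2*m) = t - 1" .
  moreover have "(t-1-r) mod (2*m) < 2*m" using m2 by simp
  ultimately have st: "s < t" "t \<le> s + (n+2)" using assms m2 by linarith+
  have smod: "s mod (2*m) = r" unfolding s_def using r1 by simp
  have "sig n s = j"
  proof (cases "r < m")
    case True
    then show ?thesis unfolding sig_def m_def[symmetric] Let_def smod
      using r1 assms by (auto simp: r_def split: if_splits)
  next
    case False
    then have "r mod m = r - m" using r1 by (simp add: le_mod_geq)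
    moreover have "r - m \<noteq> 0" "r \<noteq> 0" using False r1 by auto
    ultimately show ?thesis unfolding sig_def m_def[symmetric] Let_def smod
      using r1 False assms by (auto simp: r_def split: if_splits)
  qed
  moreover have "s \<ge> 1" using r1 unfolding s_def by simp
  ultimately show ?thesis using st by blast
qed

lemma main_inst:
  fixes n :: nat and \<epsilon> :: real
  assumes "even n" and "n \<ge> 2" and "0 < \<epsilon>" and "\<epsilon> < 1/2"
  defines "h \<equiv> (\<lambda>j::nat. if j = 1 then 1 else 1/2 + \<epsilon>)"
  shows "H_PW (n + 1) h = real (n + 1) \<and>
    H_star (n + 1) h \<le> ereal (real n / 2 + 1 + (real n + 2) * \<epsilon>) \<and>
    1 \<le> H_star (n + 1) h \<and> valid_instance (n+1) h"
proof (intro conjI)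
  have "(\<Sum>j=1..n+1. round_rate (h j)) = (\<Sum>j=1..n+1. (1::real))"
    by (rule sum.cong) (use assms in \<open>auto simp: h_def intro: rr1\<close>)
  then show "H_PW (n + 1) h = real (n + 1)" unfolding H_PW_def by simp
next
  let ?B = "real n / 2 + 1 + (real n + 2) * \<epsilon>"
  have sch: "schedule (n+1) (sig n)" unfolding schedule_def sig_def Let_def
    using assms(1) by (auto simp: Let_def) 
  have "sched_height (n+1) h (sig n) \<le> ereal ?B"
    unfolding sched_height_def
  proof (rule SUP_least)
    fix p :: "nat \<times> nat" assume p: "p \<in> {1..} \<times> {1..n + 1}"
    obtain t j :: nat where tj: "p = (t, j)" by force
    have nm: "real (n div 2 + 1) = real n / 2 + 1" using assms(1) by auto
    show "ereal (height_at h (sig n) (snd p) (fst p)) \<le> ereal ?B"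
    proof (cases "j = 1")
      case True
      have "t - last_cut (sig n) j t \<le> n div 2 + 1"
      proof (rule gap_le)
        show "t \<le> n div 2 + 1 \<or> (\<exists>s. 1 \<le> s \<and> s < t \<and> sig n s = j \<and> t \<le> s + (n div 2 + 1))"
          using sig_one[of n t] True by (cases "t \<le> n div 2 + 1") auto
      qed
      then have "real (t - last_cut (sig n) j t) \<le> real n / 2 + 1" using nm by linarith
      moreover have "0 \<le> (real n + 2) * \<epsilon>" using assms by simp
      ultimately show ?thesis using tj True by (simp add: height_at_def h_def)
    next
      case False
      have "t - last_cut (sig n) j t \<le> n + 2"
        apply (rule gap_le) using sig_other[of n j t] p tj False assms by force
      then have "real (t - last_cut (sig n) j t) \<le> real n + 2" by linarith
      then have "(1/2 + \<epsilon>) * real (t - last_cut (sig n) j t) \<le> (1/2+\<epsilon>) * (real n + 2)"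
        using assms by (intro mult_left_mono) auto
      then show ?thesis using tj False by (simp add: height_at_def h_def algebra_simps)
    qed
  qed
  then show "H_star (n + 1) h \<le> ereal ?B"
    unfolding H_star_def using sch by (meson INF_lower2 mem_Collect_eq)
next
  show "1 \<le> H_star (n + 1) h" unfolding H_star_def
  proof (rule INF_greatest)
    fix \<sigma> assume "\<sigma> \<in> {\<sigma>. schedule (n + 1) \<sigma>}"
    have lc: "last_cut \<sigma> 1 1 = 0"
    proof -
      have "{s. 1 \<le> s \<and> s < (1::nat) \<and> \<sigma> s = (1::nat)} \<union> {0} = {0}" by auto
      then show ?thesis unfolding last_cut_def by (simp only:) simp
    qed
    have "ereal (height_at h \<sigma> (snd (1::nat,1::nat)) (fst (1::nat,1::nat))) \<le> sched_height (n+1) h \<sigma>"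
      unfolding sched_height_def by (rule SUP_upper[where i="(1::nat,1::nat)"]) auto
    then show "1 \<le> sched_height (n + 1) h \<sigma>" using lc by (simp add: height_at_def h_def one_ereal_def del: One_nat_def)
  qed
next
  show "valid_instance (n+1) h" unfolding valid_instance_def h_def using assms by auto
qed

theorem lemma1:
  fixes n :: nat and \<epsilon> :: real
  assumes "even n" and "n \<ge> 2" and "0 < \<epsilon>" and "\<epsilon> < 1/2"
  defines "h \<equiv> (\<lambda>j::nat. if j = 1 then 1 else 1/2 + \<epsilon>)"
  shows "H_PW (n + 1) h = real (n + 1) \<and>
    H_star (n + 1) h \<le> ereal (real n / 2 + 1 + (real n + 2) * \<epsilon>) \<and>
    (SUP p \<in> {(m, g). valid_instance m g}. ereal (H_PW (fst p) (snd p)) / H_star (fst p) (snd p)) \<ge> 2"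
proof -
  let ?S = "(SUP p \<in> {(m, g). valid_instance m g}. ereal (H_PW (fst p) (snd p)) / H_star (fst p) (snd p))"
  have ratio: "ereal (2 * (real k + 1) / (real k + 3)) \<le> ?S" if k: "even k" "k \<ge> 2" for k :: nat
  proof -
    define e :: real where "e = 1 / (2 * (real k + 2))"
    define g where "g = (\<lambda>j::nat. if j = 1 then 1 else 1/2 + e)"
    have e: "0 < e" "e < 1/2" using k by (auto simp: e_def field_simps)
    note M = main_inst[OF k e, folded g_def]
    have B: "real k / 2 + 1 + (real k + 2) * e = (real k + 3) / 2"
      by (simp add: e_def field_simps)
    obtain c where c: "H_star (k+1) g = ereal c" "1 \<le> c" "c \<le> (real k + 3)/2"
      using M B by (cases "H_star (k+1) g") auto
    have "2 * (real k + 1) / (real k + 3) = (real k + 1) / ((real k + 3)/2)" by simp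
    also have "\<dots> \<le> (real k + 1) / c" using c by (intro divide_left_mono) auto
    finally have "ereal (2 * (real k + 1) / (real k + 3)) \<le> ereal (H_PW (k+1) g) / H_star (k+1) g"
      using M c by (simp add: add.commute)
    also have "\<dots> \<le> ?S"
    proof -
      have mem: "(k+1, g) \<in> {(m, g). valid_instance m g}" using M by simp
      show ?thesis using SUP_upper[OF mem, of "\<lambda>p. ereal (H_PW (fst p) (snd p)) / H_star (fst p) (snd p)"] by simp
    qed
    finally show ?thesis .
  qed
  have "2 \<le> ?S"
  proof (rule dense_le)
    fix y :: ereal assume y: "y < 2"
    show "y \<le> ?S"
    proof (cases y)
      case (real r)
      then have r: "r < 2" using y by simp
      obtain q :: nat where q: "4 / (2 - r) < real q" using reals_Archimedean2 by blast
      define k where "k = 2*q + 2"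
      have "4 / (2-r) < real k + 3" using q by (simp add: k_def)
      then have "4 < (2 - r) * (real k + 3)" using r by (simp add: field_simps)
      then have "r \<le> 2 * (real k + 1) / (real k + 3)" by (simp add: field_simps)
      then have "y \<le> ereal (2 * (real k + 1) / (real k + 3))" using real by simp
      also have "\<dots> \<le> ?S" by (rule ratio) (auto simp: k_def)
      finally show ?thesis .
    qed (use y in auto)
  qed
  then show ?thesis using main_inst[OF assms(1-4)] unfolding h_def by simp
qed

end
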